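(* Let $p_1,\dots,p_5$ be the vertices of a regular simplex in $\mathbb{E}^4$ with edge length $\sqrt2$. Then the minimum radius of a circumscribing cylinder of this simplex is $\sqrt{49/80}=\frac{7\sqrt5}{20}\approx0.7826$, and it is attained by a cylinder whose axis is parallel to $p_2+p_3-p_4-p_5$ (and, by symmetry, to any vector obtained by permuting the vertices).
   Context: A cylinder in $\mathbb{E}^n$ is the set of points at fixed distance $\rho>0$ (its radius) from a line (its axis). A cylinder is circumscribing for a simplex if all vertices of the simplex lie on it. *)

theory Defs
  imports "HOL-Analysis.Analysis"
begin

definition line_through :: "'a::real_normed_vector \<Rightarrow> 'a \<Rightarrow> 'a set" where
  "line_through a d = {a + t *\<^sub>R d | t. True}"

definition cylinder :: "'a::real_normed_vector \<Rightarrow> 'a \<Rightarrow> real \<Rightarrow> 'a set" where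
  "cylinder a d \<rho> = {x. infdist x (line_through a d) = \<rho>}"

definition circumscribing_cylinder ::
  "'i set \<Rightarrow> ('i \<Rightarrow> 'a::real_normed_vector) \<Rightarrow> 'a \<Rightarrow> 'a \<Rightarrow> real \<Rightarrow> bool" where
  "circumscribing_cylinder V p a d \<rho> \<longleftrightarrow>
     d \<noteq> 0 \<and> \<rho> > 0 \<and> (\<forall>i\<in>V. p i \<in> cylinder a d \<rho>)"

end

theory Submission
  imports Defs
begin



lemma final_real:
  fixes Bp Bn S T Dp Dn :: real
  assumes "Bp \<ge> 0" "Bn \<ge> 0" "Bp + Bn = 1" "S \<ge> 0" "T \<ge> 0" "S^2 \<le> 2*Bp"
    "Bp^2 \<le> S*T" "Bn^2 \<le> S*T" "T^2 \<le> Bp*Dp" "T^2 \<le> Bn*Dn" "Dp \<ge> 0" "Dn \<ge> 0"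
  shows "Dp + Dn \<ge> 1/4"
proof -
  have M: "(Bp^2)^2 \<le> 2*Bp*T^2" "(Bn^2)^2 \<le> 2*Bp*T^2"
  proof -
    have "(Bp^2)^2 \<le> (S*T)^2" using assms(7) by (intro power_mono) auto
    also have "\<dots> = S^2 * T^2" by (simp add: power_mult_distrib)
    also have "\<dots> \<le> 2*Bp*T^2" using assms(6) by (intro mult_right_mono) auto
    finally show "(Bp^2)^2 \<le> 2*Bp*T^2" .
    have "(Bn^2)^2 \<le> (S*T)^2" using assms(8) by (intro power_mono) auto
    also have "\<dots> = S^2 * T^2" by (simp add: power_mult_distrib)
    also have "\<dots> \<le> 2*Bp*T^2" using assms(6) by (intro mult_right_mono) auto
    finally show "(Bn^2)^2 \<le> 2*Bp*T^2" .
  qed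
  have key: "Bp^2*Bn \<le> 4*Bp*T^2"
  proof (cases "Bp \<le> 1/2")
    case True
    have "Bp^2 * Bn \<le> 2*(Bn^2)^2"
    proof -
      have "(1/2::real)^3 \<le> Bn^3" using True assms(1-3) by (intro power_mono) auto
      moreover have "Bp^2 \<le> (1/2)^2" using True assms(1-3) by (intro power_mono) auto
      moreover have "(1/2::real)^3 = 1/8" "(1/2::real)^2 = 1/4" by (simp_all add: power_divide)
      ultimately have "Bp^2 \<le> 2*Bn^3" by linarith
      then have "Bp^2*Bn \<le> 2*Bn^3*Bn" using assms(2) by (rule mult_right_mono)
      then show ?thesis by (simp add: power_def algebra_simps)
    qed
    then show ?thesis using M by linarith
  next
    case False
    have "Bp^2 * Bn \<le> 2*(Bp^2)^2"
    proof -
      have "(1/2::real)^2 \<le> Bp^2" using False assms(1-3) by (intro power_mono) auto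
      moreover have "(1/2::real)^2 = 1/4" by (simp add: power_divide)
      ultimately have "Bn \<le> 2*Bp^2" using False assms(1-3) by linarith
      then have "Bp^2*Bn \<le> Bp^2*(2*Bp^2)" by (rule mult_left_mono) simp
      then show ?thesis by (simp add: power_def algebra_simps)
    qed
    then show ?thesis using M by linarith
  qed
  show ?thesis
  proof (cases "Bp = 0 \<or> Bn = 0")
    case True
    then show ?thesis
    proof
      assume "Bp = 0" then have "Bn = 1" using assms by simp
      then show ?thesis using M(2) \<open>Bp = 0\<close> by simp
    next
      assume "Bn = 0" then have "Bp = 1" using assms by simp
      then have "1 \<le> 2*T^2" using M(1) by simp
      moreover have "T^2 \<le> Dp" using assms(9) \<open>Bp = 1\<close> by simp
      ultimately show ?thesis using assms by linarith
    qed
  next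
    case False
    then have pos: "Bp > 0" "Bn > 0" using assms by auto
    have "Bp*Bn*(Dp+Dn) = Bn*(Bp*Dp) + Bp*(Bn*Dn)" by (simp add: algebra_simps)
    also have "\<dots> \<ge> Bn*T^2 + Bp*T^2" using assms pos
      by (intro add_mono mult_left_mono) auto
    finally have "Bp*Bn*(Dp+Dn) \<ge> (Bn + Bp)*T^2" by (simp add: algebra_simps)
    then have "Bp*Bn*(Dp+Dn) \<ge> T^2" using assms(3) by (simp add: add.commute)
    moreover have "Bp*(Bp*Bn) \<le> Bp*(4*T^2)" using key by (simp add: power2_eq_square algebra_simps)
    then have "Bp*Bn \<le> 4*T^2" using pos by simp
    ultimately have "Bp*Bn*(Dp+Dn) \<ge> Bp*Bn*(1/4)" by linarith
    then show ?thesis using pos by simp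
  qed
qed


lemma key_aux:
  fixes s :: "'i \<Rightarrow> real"
  assumes fin: "finite I" and P2: "card {i\<in>I. s i > 0} \<le> 2"
    and s1: "(\<Sum>i\<in>I. s i) = 0" and s2: "(\<Sum>i\<in>I. (s i)^2) = 1" and s3: "(\<Sum>i\<in>I. (s i)^3) = 0"
  shows "(\<Sum>i\<in>I. (s i)^4) \<ge> 1/4"
proof -
  define x where "x i = max (s i) 0" for i
  define y where "y i = max (- s i) 0" for i
  have x0: "x i \<ge> 0" "y i \<ge> 0" for i by (auto simp: x_def y_def)
  have p1: "s i = x i - y i" for i by (auto simp: x_def y_def)
  have p2: "(s i)^2 = (x i)^2 + (y i)^2" for i by (auto simp: x_def y_def max_def)
  have p3: "(s i)^3 = (x i)^3 - (y i)^3" for i by (auto simp: x_def y_def max_def)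
  have p4: "(s i)^4 = (x i)^4 + (y i)^4" for i by (auto simp: x_def y_def max_def)
  define S where "S = (\<Sum>i\<in>I. x i)"
  define T where "T = (\<Sum>i\<in>I. (x i)^3)"
  define Bp where "Bp = (\<Sum>i\<in>I. (x i)^2)"
  define Bn where "Bn = (\<Sum>i\<in>I. (y i)^2)"
  define Dp where "Dp = (\<Sum>i\<in>I. (x i)^4)"
  define Dn where "Dn = (\<Sum>i\<in>I. (y i)^4)"
  have SY: "(\<Sum>i\<in>I. y i) = S"
  proof -
    have "(\<Sum>i\<in>I. s i) = S - (\<Sum>i\<in>I. y i)" unfolding S_def p1 by (simp add: sum_subtractf)
    then show ?thesis using s1 by simp
  qed
  have TY: "(\<Sum>i\<in>I. (y i)^3) = T"
  proof -
    have "(\<Sum>i\<in>I. (s i)^3) = T - (\<Sum>i\<in>I. (y i)^3)" unfolding T_def p3 by (simp add: sum_subtractf)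
    then show ?thesis using s3 by simp
  qed
  have B1: "Bp + Bn = 1" using s2 unfolding Bp_def Bn_def p2 by (simp add: sum.distrib)
  have D: "(\<Sum>i\<in>I. (s i)^4) = Dp + Dn" unfolding Dp_def Dn_def p4 by (simp add: sum.distrib)
  have cs1: "T^2 \<le> Bp*Dp"
    using Cauchy_Schwarz_ineq_sum[of x "\<lambda>i. (x i)^2" I]
    unfolding T_def Bp_def Dp_def by (simp add: power_def algebra_simps)
  have cs2: "T^2 \<le> Bn*Dn"
    using Cauchy_Schwarz_ineq_sum[of y "\<lambda>i. (y i)^2" I]
    unfolding TY[symmetric] Bn_def Dn_def by (simp add: power_def algebra_simps)
  have cs3: "Bp^2 \<le> S*T"
  proof -
    have "(\<Sum>i\<in>I. sqrt (x i) * (x i * sqrt (x i)))^2 \<le> (\<Sum>i\<in>I. (sqrt (x i))^2) * (\<Sum>i\<in>I. (x i * sqrt (x i))^2)"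
      by (rule Cauchy_Schwarz_ineq_sum)
    moreover have "sqrt (x i) * (x i * sqrt (x i)) = (x i)^2" "(sqrt (x i))^2 = x i"
      "(x i * sqrt (x i))^2 = (x i)^3" for i
      using x0(1)[of i] by (simp_all add: power_def algebra_simps)
    ultimately show ?thesis unfolding Bp_def S_def T_def by simp
  qed
  have cs4: "Bn^2 \<le> S*T"
  proof -
    have "(\<Sum>i\<in>I. sqrt (y i) * (y i * sqrt (y i)))^2 \<le> (\<Sum>i\<in>I. (sqrt (y i))^2) * (\<Sum>i\<in>I. (y i * sqrt (y i))^2)"
      by (rule Cauchy_Schwarz_ineq_sum)
    moreover have "sqrt (y i) * (y i * sqrt (y i)) = (y i)^2" "(sqrt (y i))^2 = y i"
      "(y i * sqrt (y i))^2 = (y i)^3" for i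
      using x0(2)[of i] by (simp_all add: power_def algebra_simps)
    ultimately show ?thesis unfolding Bn_def SY[symmetric] TY[symmetric] by simp
  qed
  have cs5: "S^2 \<le> 2*Bp"
  proof -
    let ?P = "{i\<in>I. s i > 0}"
    have "S = (\<Sum>i\<in>?P. x i)" unfolding S_def
      by (rule sum.mono_neutral_right) (auto simp: fin x_def)
    then have "S = (\<Sum>i\<in>?P. 1 * x i)" by simp
    then have "S^2 \<le> (\<Sum>i\<in>?P. 1^2) * (\<Sum>i\<in>?P. (x i)^2)"
      using Cauchy_Schwarz_ineq_sum[of "\<lambda>_. 1" x ?P] by simp
    also have "\<dots> \<le> 2 * Bp"
    proof (rule mult_mono)
      show "(\<Sum>i\<in>?P. (1::real)^2) \<le> 2" using P2 by simp
      show "(\<Sum>i\<in>?P. (x i)^2) \<le> Bp" unfolding Bp_def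
        by (rule sum_mono2) (auto simp: fin)
    qed (auto intro: sum_nonneg)
    finally show ?thesis .
  qed
  have "Dp + Dn \<ge> 1/4"
    by (rule final_real[of Bp Bn S T]) (use B1 cs1 cs2 cs3 cs4 cs5 x0 in
      \<open>auto simp: Bp_def Bn_def S_def T_def Dp_def Dn_def intro!: sum_nonneg\<close>)
  then show ?thesis using D by simp
qed

lemma key_ineq:
  fixes s :: "'i \<Rightarrow> real"
  assumes fin: "finite I" and c5: "card I = 5"
    and s1: "(\<Sum>i\<in>I. s i) = 0" and s2: "(\<Sum>i\<in>I. (s i)^2) = 1" and s3: "(\<Sum>i\<in>I. (s i)^3) = 0"
  shows "(\<Sum>i\<in>I. (s i)^4) \<ge> 1/4"
proof -
  have "card {i\<in>I. s i > 0} + card {i\<in>I. s i < 0} = card ({i\<in>I. s i > 0} \<union> {i\<in>I. s i < 0})"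
    by (rule card_Un_disjoint[symmetric]) (auto simp: fin)
  also have "\<dots> \<le> card I" by (rule card_mono) (auto simp: fin)
  finally have "card {i\<in>I. s i > 0} \<le> 2 \<or> card {i\<in>I. - s i > 0} \<le> 2" using c5 by auto
  then show ?thesis
  proof
    assume "card {i\<in>I. s i > 0} \<le> 2"
    then show ?thesis using key_aux[OF fin _ s1 s2 s3] by blast
  next
    assume h: "card {i\<in>I. - s i > 0} \<le> 2"
    have "(\<Sum>i\<in>I. (- s i)^4) \<ge> 1/4"
      by (rule key_aux[OF fin h]) (use s1 s2 s3 in \<open>simp_all add: sum_negf\<close>)
    then show ?thesis by simp
  qed
qed



lemma infdist_line:
  fixes x a d :: "'a::real_inner"
  assumes "d \<noteq> 0"
  shows "(infdist x (line_through a d))^2 = (norm (x - a))^2 - ((x - a) \<bullet> d)^2 / (d \<bullet> d)"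
proof -
  define t0 where "t0 = ((x - a) \<bullet> d) / (d \<bullet> d)"
  have dd: "d \<bullet> d > 0" using assms by simp
  have sq: "(dist x (a + t *\<^sub>R d))^2 = (norm (x - a))^2 - ((x - a) \<bullet> d)^2 / (d \<bullet> d) + (t - t0)^2 * (d \<bullet> d)" for t
  proof -
    have "(dist x (a + t *\<^sub>R d))^2 = (x - a - t *\<^sub>R d) \<bullet> (x - a - t *\<^sub>R d)"
      by (simp add: dist_norm power2_norm_eq_inner algebra_simps)
    also have "\<dots> = (x - a) \<bullet> (x - a) - 2 * t * ((x - a) \<bullet> d) + t^2 * (d \<bullet> d)"
      by (simp add: inner_diff_left inner_diff_right inner_commute power2_eq_square algebra_simps)
    also have "\<dots> = (norm (x - a))^2 - ((x - a) \<bullet> d)^2 / (d \<bullet> d) + (t - t0)^2 * (d \<bullet> d)"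
      using dd unfolding t0_def power2_norm_eq_inner by (simp add: field_simps power2_eq_square)
    finally show ?thesis .
  qed
  have mem: "a + t0 *\<^sub>R d \<in> line_through a d" unfolding line_through_def by auto
  have ne: "line_through a d \<noteq> {}" using mem by auto
  have "infdist x (line_through a d) = dist x (a + t0 *\<^sub>R d)"
  proof (rule antisym)
    show "infdist x (line_through a d) \<le> dist x (a + t0 *\<^sub>R d)" by (rule infdist_le[OF mem])
    show "dist x (a + t0 *\<^sub>R d) \<le> infdist x (line_through a d)"
      unfolding infdist_notempty[OF ne]
    proof (rule cINF_greatest[OF ne])
      fix y assume "y \<in> line_through a d"
      then obtain t where y: "y = a + t *\<^sub>R d" unfolding line_through_def by auto
      have "(dist x (a + t0 *\<^sub>R d))^2 \<le> (dist x y)^2" using sq[of t] sq[of t0] dd y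
        by simp
      then show "dist x (a + t0 *\<^sub>R d) \<le> dist x y" by (simp add: power_mono_iff)
    qed
  qed
  then show ?thesis using sq[of t0] by simp
qed

lemma span4:
  fixes q1 q2 q3 q4 :: "real^4"
  assumes g: "q1 \<bullet> q1 = 2" "q2 \<bullet> q2 = 2" "q3 \<bullet> q3 = 2" "q4 \<bullet> q4 = 2"
    "q1 \<bullet> q2 = 1" "q1 \<bullet> q3 = 1" "q1 \<bullet> q4 = 1" "q2 \<bullet> q3 = 1" "q2 \<bullet> q4 = 1" "q3 \<bullet> q4 = 1"
  shows "\<exists>c1 c2 c3 c4. x = c1 *\<^sub>R q1 + c2 *\<^sub>R q2 + c3 *\<^sub>R q3 + c4 *\<^sub>R q4"
proof -
  have g': "q2 \<bullet> q1 = 1" "q3 \<bullet> q1 = 1" "q4 \<bullet> q1 = 1" "q3 \<bullet> q2 = 1" "q4 \<bullet> q2 = 1" "q4 \<bullet> q3 = 1"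
    using g by (simp_all add: inner_commute)
  have dist: "q1 \<noteq> q2" "q1 \<noteq> q3" "q1 \<noteq> q4" "q2 \<noteq> q3" "q2 \<noteq> q4" "q3 \<noteq> q4"
    using g by auto
  let ?B = "{q1, q2, q3, q4}"
  have sumB: "(\<Sum>v\<in>?B. u v *\<^sub>R v) = u q1 *\<^sub>R q1 + u q2 *\<^sub>R q2 + u q3 *\<^sub>R q3 + u q4 *\<^sub>R q4" for u
    using dist by (simp add: algebra_simps)
  have cardB: "card ?B = 4" using dist by simp
  have ind: "independent ?B"
  proof
    assume "dependent ?B"
    then obtain u where u: "\<exists>v\<in>?B. u v \<noteq> 0" "(\<Sum>v\<in>?B. u v *\<^sub>R v) = 0"
      unfolding dependent_finite[OF finite.insertI[OF finite.insertI[OF finite.insertI[OF finite.insertI[OF finite.emptyI]]]]] by blast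
    have z: "u q1 *\<^sub>R q1 + u q2 *\<^sub>R q2 + u q3 *\<^sub>R q3 + u q4 *\<^sub>R q4 = 0" using u(2) sumB by simp
    have "q \<bullet> (u q1 *\<^sub>R q1 + u q2 *\<^sub>R q2 + u q3 *\<^sub>R q3 + u q4 *\<^sub>R q4) = 0" for q using z by simp
    from this[of q1] this[of q2] this[of q3] this[of q4]
    have "2*u q1 + u q2 + u q3 + u q4 = 0" "u q1 + 2*u q2 + u q3 + u q4 = 0"
      "u q1 + u q2 + 2*u q3 + u q4 = 0" "u q1 + u q2 + u q3 + 2*u q4 = 0"
      by (simp_all add: inner_add_right g g' algebra_simps)
    then have "u q1 = 0" "u q2 = 0" "u q3 = 0" "u q4 = 0" by linarith+
    then show False using u(1) by auto
  qed
  have "UNIV \<subseteq> span ?B"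
    by (rule card_ge_dim_independent[OF subset_UNIV ind]) (simp add: cardB)
  then have "x \<in> span ?B" by auto
  then obtain u where "x = (\<Sum>v\<in>?B. u v *\<^sub>R v)" unfolding span_finite[OF finite.insertI[OF finite.insertI[OF finite.insertI[OF finite.insertI[OF finite.emptyI]]]]] by auto
  then show ?thesis using sumB by blast
qed



lemma gram_comb:
  fixes q1 q2 q3 q4 :: "'a::real_inner"
  assumes g: "q1 \<bullet> q1 = 2" "q2 \<bullet> q2 = 2" "q3 \<bullet> q3 = 2" "q4 \<bullet> q4 = 2"
    "q1 \<bullet> q2 = 1" "q1 \<bullet> q3 = 1" "q1 \<bullet> q4 = 1" "q2 \<bullet> q3 = 1" "q2 \<bullet> q4 = 1" "q3 \<bullet> q4 = 1"
  shows "(c1 *\<^sub>R q1 + c2 *\<^sub>R q2 + c3 *\<^sub>R q3 + c4 *\<^sub>R q4) \<bullet> (e1 *\<^sub>R q1 + e2 *\<^sub>R q2 + e3 *\<^sub>R q3 + e4 *\<^sub>R q4)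
    = c1*e1 + c2*e2 + c3*e3 + c4*e4 + (c1+c2+c3+c4)*(e1+e2+e3+e4)"
proof -
  have g': "q2 \<bullet> q1 = 1" "q3 \<bullet> q1 = 1" "q4 \<bullet> q1 = 1" "q3 \<bullet> q2 = 1" "q4 \<bullet> q2 = 1" "q4 \<bullet> q3 = 1"
    using g by (simp_all add: inner_commute)
  show ?thesis by (simp add: inner_add_left inner_add_right g g' algebra_simps)
qed

lemma alg5:
  fixes s1 s2 s3 s4 s5 b1 b2 b3 b4 b5 r beta B :: real
  assumes S0: "s1+s2+s3+s4+s5 = 0" and B0: "b1+b2+b3+b4+b5 = 0"
    and S2: "s1^2+s2^2+s3^2+s4^2+s5^2 = 1"
    and beta: "beta = b1* s1+b2* s2+b3* s3+b4* s4+b5* s5"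
    and BB: "B = b1^2+b2^2+b3^2+b4^2+b5^2"
    and E1: "r = 4/5 - 2*b1 + B - (s1 - beta)^2"
    and E2: "r = 4/5 - 2*b2 + B - (s2 - beta)^2"
    and E3: "r = 4/5 - 2*b3 + B - (s3 - beta)^2"
    and E4: "r = 4/5 - 2*b4 + B - (s4 - beta)^2"
    and E5: "r = 4/5 - 2*b5 + B - (s5 - beta)^2"
  shows "r \<ge> 49/80"
proof -
  have sq: "(t - beta)^2 = t^2 - 2 * t * beta + beta^2" for t by (simp add: power2_eq_square algebra_simps)
  have r0: "r = 3/5 + B - beta^2"
  proof -
    have "5*r = 4 - 2*(b1+b2+b3+b4+b5) + 5*B - (s1^2+s2^2+s3^2+s4^2+s5^2) + 2*(s1+s2+s3+s4+s5)*beta - 5*beta^2"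
      using E1 E2 E3 E4 E5 unfolding sq by (simp add: algebra_simps)
    then show ?thesis using S0 B0 S2 by simp
  qed
  have z: "b1 - beta* s1 = (1/5 - s1^2)/2" "b2 - beta* s2 = (1/5 - s2^2)/2" "b3 - beta* s3 = (1/5 - s3^2)/2"
    "b4 - beta* s4 = (1/5 - s4^2)/2" "b5 - beta* s5 = (1/5 - s5^2)/2"
    using E1 E2 E3 E4 E5 r0 unfolding sq by (simp_all add: algebra_simps)
  have "s1*(b1 - beta* s1) + s2*(b2 - beta* s2) + s3*(b3 - beta* s3) + s4*(b4 - beta* s4) + s5*(b5 - beta* s5)
      = beta - beta*(s1^2+s2^2+s3^2+s4^2+s5^2)"
    unfolding beta by (simp add: power2_eq_square algebra_simps)
  then have "s1*((1/5 - s1^2)/2) + s2*((1/5 - s2^2)/2) + s3*((1/5 - s3^2)/2) + s4*((1/5 - s4^2)/2) + s5*((1/5 - s5^2)/2) = 0"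
    using S2 unfolding z by simp
  moreover have "s1*((1/5 - s1^2)/2) + s2*((1/5 - s2^2)/2) + s3*((1/5 - s3^2)/2) + s4*((1/5 - s4^2)/2) + s5*((1/5 - s5^2)/2)
     = (s1+s2+s3+s4+s5)/10 - (s1^3+s2^3+s3^3+s4^3+s5^3)/2"
    by (simp add: power_def field_simps)
  ultimately have S3: "s1^3+s2^3+s3^3+s4^3+s5^3 = 0" using S0 by simp
  have "(b1 - beta* s1)^2 + (b2 - beta* s2)^2 + (b3 - beta* s3)^2 + (b4 - beta* s4)^2 + (b5 - beta* s5)^2
     = B - 2*beta*(b1* s1+b2* s2+b3* s3+b4* s4+b5* s5) + beta^2*(s1^2+s2^2+s3^2+s4^2+s5^2)"
    unfolding BB by (simp add: power2_eq_square algebra_simps)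
  then have "((1/5 - s1^2)/2)^2 + ((1/5 - s2^2)/2)^2 + ((1/5 - s3^2)/2)^2 + ((1/5 - s4^2)/2)^2 + ((1/5 - s5^2)/2)^2
     = B - beta^2" using S2 unfolding z beta[symmetric] by (simp add: power2_eq_square)
  moreover have "((1/5 - s1^2)/2)^2 + ((1/5 - s2^2)/2)^2 + ((1/5 - s3^2)/2)^2 + ((1/5 - s4^2)/2)^2 + ((1/5 - s5^2)/2)^2
     = ((s1^4+s2^4+s3^4+s4^4+s5^4) - (2/5)*(s1^2+s2^2+s3^2+s4^2+s5^2) + 1/5)/4"
    by (simp add: power_def field_simps)
  moreover have "s1^4+s2^4+s3^4+s4^4+s5^4 \<ge> 1/4"
  proof -
    let ?f = "\<lambda>i::nat. [s1,s2,s3,s4,s5] ! i"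
    have "(\<Sum>i\<in>{..<5}. (?f i)^4) \<ge> 1/4"
      by (rule key_ineq) (use S0 S2 S3 in \<open>simp_all add: numeral_eq_Suc lessThan_Suc algebra_simps\<close>)
    then show ?thesis by (simp add: numeral_eq_Suc lessThan_Suc algebra_simps)
  qed
  ultimately have "B - beta^2 = ((s1^4+s2^4+s3^4+s4^4+s5^4) - 1/5)/4" using S2 by simp
  then have "4*(B - beta^2) = (s1^4+s2^4+s3^4+s4^4+s5^4) - 1/5" by simp
  moreover have aux: "\<And>X Y r::real. 4*Y = X - 1/5 \<Longrightarrow> r = 3/5 + Y \<Longrightarrow> 1/4 \<le> X \<Longrightarrow> 49/80 \<le> r"
    by linarith
  ultimately show ?thesis using r0 \<open>s1^4+s2^4+s3^4+s4^4+s5^4 \<ge> 1/4\<close> by (metis add_diff_eq)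
qed



lemma lower_geom:
  fixes P1 P2 P3 P4 P5 a d :: "real^4" and \<rho> :: real
  assumes n: "(norm (P1 - P2))^2 = 2" "(norm (P1 - P3))^2 = 2" "(norm (P1 - P4))^2 = 2" "(norm (P1 - P5))^2 = 2"
    "(norm (P2 - P3))^2 = 2" "(norm (P2 - P4))^2 = 2" "(norm (P2 - P5))^2 = 2"
    "(norm (P3 - P4))^2 = 2" "(norm (P3 - P5))^2 = 2" "(norm (P4 - P5))^2 = 2"
  and d: "d \<noteq> 0"
  and i: "infdist P1 (line_through a d) = \<rho>" "infdist P2 (line_through a d) = \<rho>"
    "infdist P3 (line_through a d) = \<rho>" "infdist P4 (line_through a d) = \<rho>"
    "infdist P5 (line_through a d) = \<rho>"
  shows "\<rho>^2 \<ge> 49/80"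
proof -
  define q1 where "q1 = P1 - P5"
  define q2 where "q2 = P2 - P5"
  define q3 where "q3 = P3 - P5"
  define q4 where "q4 = P4 - P5"
  have nn: "(norm x)^2 = x \<bullet> x" for x :: "real^4" by (simp add: power2_norm_eq_inner)
  have dq: "P1 - P2 = q1 - q2" "P1 - P3 = q1 - q3" "P1 - P4 = q1 - q4" "P2 - P3 = q2 - q3"
    "P2 - P4 = q2 - q4" "P3 - P4 = q3 - q4"
    by (simp_all add: q1_def q2_def q3_def q4_def)
  have gd: "q1 \<bullet> q1 = 2" "q2 \<bullet> q2 = 2" "q3 \<bullet> q3 = 2" "q4 \<bullet> q4 = 2"
    using n unfolding q1_def q2_def q3_def q4_def nn by simp_all
  have gx: "(x - y) \<bullet> (x - y) = x \<bullet> x + y \<bullet> y - 2 * (x \<bullet> y)" for x y :: "real^4"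
    by (simp add: inner_diff_left inner_diff_right inner_commute)
  have g: "q1 \<bullet> q2 = 1" "q1 \<bullet> q3 = 1" "q1 \<bullet> q4 = 1" "q2 \<bullet> q3 = 1" "q2 \<bullet> q4 = 1" "q3 \<bullet> q4 = 1"
    using n(1,2,3,5,6,8) unfolding dq nn gx gd by simp_all
  note G = gd g
  define u where "u = (1 / norm d) *\<^sub>R d"
  have nd: "norm d > 0" using d by simp
  have E: "\<rho>^2 = (x - a) \<bullet> (x - a) - ((x - a) \<bullet> u)^2" if "infdist x (line_through a d) = \<rho>" for x
  proof -
    have "\<rho>^2 = (norm (x - a))^2 - ((x - a) \<bullet> d)^2 / (d \<bullet> d)"
      using infdist_line[OF d, of x a] that by simp
    moreover have "((x - a) \<bullet> u)^2 = ((x - a) \<bullet> d)^2 / (d \<bullet> d)"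
      unfolding u_def using nd by (simp add: power_divide power2_norm_eq_inner[symmetric] field_simps)
    ultimately show ?thesis by (simp add: nn)
  qed
  have uu: "u \<bullet> u = 1" unfolding u_def using nd by (simp add: power2_norm_eq_inner[symmetric] field_simps)
  obtain a1 a2 a3 a4 where ua: "u = a1 *\<^sub>R q1 + a2 *\<^sub>R q2 + a3 *\<^sub>R q3 + a4 *\<^sub>R q4"
    using span4[OF G] by blast
  obtain c1 c2 c3 c4 where ac: "a - P5 = c1 *\<^sub>R q1 + c2 *\<^sub>R q2 + c3 *\<^sub>R q3 + c4 *\<^sub>R q4"
    using span4[OF G] by blast
  have v1: "P1 - a = (1 - c1) *\<^sub>R q1 + (- c2) *\<^sub>R q2 + (- c3) *\<^sub>R q3 + (- c4) *\<^sub>R q4"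
  proof -
    have "P1 - a = q1 - (a - P5)" by (simp add: q1_def)
    then show ?thesis unfolding ac by (simp add: algebra_simps)
  qed
  have v2: "P2 - a = (- c1) *\<^sub>R q1 + (1 - c2) *\<^sub>R q2 + (- c3) *\<^sub>R q3 + (- c4) *\<^sub>R q4"
  proof -
    have "P2 - a = q2 - (a - P5)" by (simp add: q2_def)
    then show ?thesis unfolding ac by (simp add: algebra_simps)
  qed
  have v3: "P3 - a = (- c1) *\<^sub>R q1 + (- c2) *\<^sub>R q2 + (1 - c3) *\<^sub>R q3 + (- c4) *\<^sub>R q4"
  proof -
    have "P3 - a = q3 - (a - P5)" by (simp add: q3_def)
    then show ?thesis unfolding ac by (simp add: algebra_simps)
  qed
  have v4: "P4 - a = (- c1) *\<^sub>R q1 + (- c2) *\<^sub>R q2 + (- c3) *\<^sub>R q3 + (1 - c4) *\<^sub>R q4"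
  proof -
    have "P4 - a = q4 - (a - P5)" by (simp add: q4_def)
    then show ?thesis unfolding ac by (simp add: algebra_simps)
  qed
  have v5: "P5 - a = (- c1) *\<^sub>R q1 + (- c2) *\<^sub>R q2 + (- c3) *\<^sub>R q3 + (- c4) *\<^sub>R q4"
  proof -
    have "P5 - a = - (a - P5)" by simp
    then show ?thesis unfolding ac by (simp add: algebra_simps)
  qed
  note gc = gram_comb[OF G]
  have U: "a1^2 + a2^2 + a3^2 + a4^2 + (-(a1+a2+a3+a4))^2 = 1"
    using uu unfolding ua gc by (simp add: power2_eq_square algebra_simps)
  define b1 where "b1 = c1 - 1/5"
  define b2 where "b2 = c2 - 1/5"
  define b3 where "b3 = c3 - 1/5"
  define b4 where "b4 = c4 - 1/5"
  define b5 where "b5 = 4/5 - (c1+c2+c3+c4)"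
  define s5 where "s5 = - (a1+a2+a3+a4)"
  define beta where "beta = b1 * a1 + b2 * a2 + b3 * a3 + b4 * a4 + b5 * s5"
  define B where "B = b1^2 + b2^2 + b3^2 + b4^2 + b5^2"
  note defs = b1_def b2_def b3_def b4_def b5_def s5_def beta_def B_def
  have N1: "(P1 - a) \<bullet> (P1 - a) = 4/5 - 2*b1 + B"
    unfolding v1 gc defs by (simp add: power2_eq_square field_simps)
  have D1: "(P1 - a) \<bullet> u = a1 - beta"
    unfolding v1 ua gc defs by (simp add: field_simps)
  have N2: "(P2 - a) \<bullet> (P2 - a) = 4/5 - 2*b2 + B"
    unfolding v2 gc defs by (simp add: power2_eq_square field_simps)
  have D2: "(P2 - a) \<bullet> u = a2 - beta"
    unfolding v2 ua gc defs by (simp add: field_simps)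
  have N3: "(P3 - a) \<bullet> (P3 - a) = 4/5 - 2*b3 + B"
    unfolding v3 gc defs by (simp add: power2_eq_square field_simps)
  have D3: "(P3 - a) \<bullet> u = a3 - beta"
    unfolding v3 ua gc defs by (simp add: field_simps)
  have N4: "(P4 - a) \<bullet> (P4 - a) = 4/5 - 2*b4 + B"
    unfolding v4 gc defs by (simp add: power2_eq_square field_simps)
  have D4: "(P4 - a) \<bullet> u = a4 - beta"
    unfolding v4 ua gc defs by (simp add: field_simps)
  have N5: "(P5 - a) \<bullet> (P5 - a) = 4/5 - 2*b5 + B"
    unfolding v5 gc defs by (simp add: power2_eq_square field_simps)
  have D5: "(P5 - a) \<bullet> u = s5 - beta"
    unfolding v5 ua gc defs by (simp add: field_simps)
  show ?thesis
  proof (rule alg5[of a1 a2 a3 a4 s5 b1 b2 b3 b4 b5 beta B])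
    show "a1 + a2 + a3 + a4 + s5 = 0" by (simp add: s5_def)
    show "b1 + b2 + b3 + b4 + b5 = 0" by (simp add: b1_def b2_def b3_def b4_def b5_def)
    show "a1^2 + a2^2 + a3^2 + a4^2 + s5^2 = 1" using U by (simp add: s5_def)
    show "beta = b1 * a1 + b2 * a2 + b3 * a3 + b4 * a4 + b5 * s5" by (rule beta_def)
    show "B = b1^2 + b2^2 + b3^2 + b4^2 + b5^2" by (rule B_def)
    show "\<rho>^2 = 4/5 - 2*b1 + B - (a1 - beta)^2"
      using E[OF i(1)] N1 D1 by simp
    show "\<rho>^2 = 4/5 - 2*b2 + B - (a2 - beta)^2"
      using E[OF i(2)] N2 D2 by simp
    show "\<rho>^2 = 4/5 - 2*b3 + B - (a3 - beta)^2"
      using E[OF i(3)] N3 D3 by simp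
    show "\<rho>^2 = 4/5 - 2*b4 + B - (a4 - beta)^2"
      using E[OF i(4)] N4 D4 by simp
    show "\<rho>^2 = 4/5 - 2*b5 + B - (s5 - beta)^2"
      using E[OF i(5)] N5 D5 by simp
  qed
qed



lemma upper_geom:
  fixes X1 X2 X3 X4 X5 :: "real^4"
  assumes n: "(norm (X1 - X2))^2 = 2" "(norm (X1 - X3))^2 = 2" "(norm (X1 - X4))^2 = 2" "(norm (X1 - X5))^2 = 2"
    "(norm (X2 - X3))^2 = 2" "(norm (X2 - X4))^2 = 2" "(norm (X2 - X5))^2 = 2"
    "(norm (X3 - X4))^2 = 2" "(norm (X3 - X5))^2 = 2" "(norm (X4 - X5))^2 = 2"
  defines "a \<equiv> (7/40) *\<^sub>R (X1 + X2 + X3 + X4 + X5) + (1/8) *\<^sub>R X1"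
  shows "X2 + X3 - X4 - X5 \<noteq> 0 \<and> (\<forall>X \<in> {X1, X2, X3, X4, X5}.
     infdist X (line_through a (X2 + X3 - X4 - X5)) = sqrt (49/80))"
proof -
  define q1 where "q1 = X2 - X1"
  define q2 where "q2 = X3 - X1"
  define q3 where "q3 = X4 - X1"
  define q4 where "q4 = X5 - X1"
  have nn: "(norm x)^2 = x \<bullet> x" for x :: "real^4" by (simp add: power2_norm_eq_inner)
  have dq: "X2 - X3 = q1 - q2" "X2 - X4 = q1 - q3" "X2 - X5 = q1 - q4" "X3 - X4 = q2 - q3"
    "X3 - X5 = q2 - q4" "X4 - X5 = q3 - q4"
    by (simp_all add: q1_def q2_def q3_def q4_def)
  have gd: "q1 \<bullet> q1 = 2" "q2 \<bullet> q2 = 2" "q3 \<bullet> q3 = 2" "q4 \<bullet> q4 = 2"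
    using n(1-4) unfolding q1_def q2_def q3_def q4_def nn by (simp_all add: inner_commute inner_diff_left inner_diff_right)
  have gx: "(x - y) \<bullet> (x - y) = x \<bullet> x + y \<bullet> y - 2 * (x \<bullet> y)" for x y :: "real^4"
    by (simp add: inner_diff_left inner_diff_right inner_commute)
  have g: "q1 \<bullet> q2 = 1" "q1 \<bullet> q3 = 1" "q1 \<bullet> q4 = 1" "q2 \<bullet> q3 = 1" "q2 \<bullet> q4 = 1" "q3 \<bullet> q4 = 1"
    using n(5-10) unfolding dq nn gx gd by simp_all
  note G = gd g
  note gc = gram_comb[OF G]
  define d where "d = X2 + X3 - X4 - X5"
  have dc: "d = 1 *\<^sub>R q1 + 1 *\<^sub>R q2 + (-1) *\<^sub>R q3 + (-1) *\<^sub>R q4"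
    unfolding d_def q1_def q2_def q3_def q4_def by (simp add: algebra_simps)
  have dd: "d \<bullet> d = 4" unfolding dc gc by simp
  then have d0: "d \<noteq> 0" by auto
  have w1: "X1 - a = (-7/40) *\<^sub>R q1 + (-7/40) *\<^sub>R q2 + (-7/40) *\<^sub>R q3 + (-7/40) *\<^sub>R q4"
    unfolding a_def q1_def q2_def q3_def q4_def by (simp add: vec_eq_iff field_simps)
  have w2: "X2 - a = (33/40) *\<^sub>R q1 + (-7/40) *\<^sub>R q2 + (-7/40) *\<^sub>R q3 + (-7/40) *\<^sub>R q4"
    unfolding a_def q1_def q2_def q3_def q4_def by (simp add: vec_eq_iff field_simps)
  have w3: "X3 - a = (-7/40) *\<^sub>R q1 + (33/40) *\<^sub>R q2 + (-7/40) *\<^sub>R q3 + (-7/40) *\<^sub>R q4"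
    unfolding a_def q1_def q2_def q3_def q4_def by (simp add: vec_eq_iff field_simps)
  have w4: "X4 - a = (-7/40) *\<^sub>R q1 + (-7/40) *\<^sub>R q2 + (33/40) *\<^sub>R q3 + (-7/40) *\<^sub>R q4"
    unfolding a_def q1_def q2_def q3_def q4_def by (simp add: vec_eq_iff field_simps)
  have w5: "X5 - a = (-7/40) *\<^sub>R q1 + (-7/40) *\<^sub>R q2 + (-7/40) *\<^sub>R q3 + (33/40) *\<^sub>R q4"
    unfolding a_def q1_def q2_def q3_def q4_def by (simp add: vec_eq_iff field_simps)
  have val: "infdist X (line_through a d) = sqrt (49/80)"
    if "(X - a) \<bullet> (X - a) - ((X - a) \<bullet> d)^2 / (d \<bullet> d) = 49/80" for X
  proof -
    have "(infdist X (line_through a d))^2 = 49/80"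
      using infdist_line[OF d0, of X a] that by (simp add: power2_norm_eq_inner)
    then show ?thesis by (intro real_sqrt_unique[symmetric]) (auto simp: infdist_nonneg)
  qed
  have "infdist X1 (line_through a d) = sqrt (49/80)" by (rule val) (unfold dd, unfold w1 dc gc, simp)
  moreover have "infdist X2 (line_through a d) = sqrt (49/80)" by (rule val) (unfold dd, unfold w2 dc gc, simp)
  moreover have "infdist X3 (line_through a d) = sqrt (49/80)" by (rule val) (unfold dd, unfold w3 dc gc, simp)
  moreover have "infdist X4 (line_through a d) = sqrt (49/80)" by (rule val) (unfold dd, unfold w4 dc gc, simp)
  moreover have "infdist X5 (line_through a d) = sqrt (49/80)" by (rule val) (unfold dd, unfold w5 dc gc, simp)
  ultimately show ?thesis using d0 unfolding d_def by auto
qed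


lemma dist_sq2: "dist x y = sqrt 2 \<Longrightarrow> (norm (x - y))^2 = (2::real)"
  by (simp add: dist_norm)

theorem mainTheorem11:
  fixes p :: "nat \<Rightarrow> real^4"
  assumes regular: "\<And>i j. i \<in> {1..5} \<Longrightarrow> j \<in> {1..5} \<Longrightarrow> i \<noteq> j \<Longrightarrow> dist (p i) (p j) = sqrt 2"
  shows "(\<forall>a d \<rho>. circumscribing_cylinder {1..5} p a d \<rho> \<longrightarrow> \<rho> \<ge> sqrt (49/80))
    \<and> (\<exists>a. circumscribing_cylinder {1..5} p a (p 2 + p 3 - p 4 - p 5) (sqrt (49/80)))
    \<and> (\<forall>i j k l. {i, j, k, l} \<subseteq> {1..5} \<and> distinct [i, j, k, l] \<longrightarrow>
         (\<exists>a. circumscribing_cylinder {1..5} p a (p i + p j - p k - p l) (sqrt (49/80))))"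
proof -
  have R: "(norm (p i - p j))^2 = 2" if "i \<in> {1..5}" "j \<in> {1..5}" "i \<noteq> j" for i j
    using dist_sq2[OF regular[OF that]] .
  have part1: "\<rho> \<ge> sqrt (49/80)" if c: "circumscribing_cylinder {1..5} p a d \<rho>" for a d \<rho>
  proof -
    have d: "d \<noteq> 0" and rp: "\<rho> > 0" and on: "\<And>i. i \<in> {1..5} \<Longrightarrow> infdist (p i) (line_through a d) = \<rho>"
      using c unfolding circumscribing_cylinder_def cylinder_def by auto
    have "\<rho>^2 \<ge> 49/80"
      by (rule lower_geom[of "p 1" "p 2" "p 3" "p 4" "p 5" d a \<rho>]) (auto intro!: R on d)
    then have "sqrt (49/80) \<le> sqrt (\<rho>^2)" by (rule real_sqrt_le_mono)
    then show ?thesis using rp by simp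
  qed
  have part3: "\<exists>a. circumscribing_cylinder {1..5} p a (p i + p j - p k - p l) (sqrt (49/80))"
    if h: "{i, j, k, l} \<subseteq> {1..5}" "distinct [i, j, k, l]" for i j k l
  proof -
    have c4: "card {i, j, k, l} = 4" using h(2) distinct_card[OF h(2)] by simp
    have "card ({1..5::nat} - {i, j, k, l}) = 1"
      using h(1) c4 by (subst card_Diff_subset) auto
    then obtain m where m: "{1..5::nat} - {i, j, k, l} = {m}" by (auto simp: card_Suc_eq)
    then have "m \<in> {1..5} - {i, j, k, l}" by blast
    then have mi: "m \<in> {1..5}" "m \<notin> {i, j, k, l}" by blast+
    have all: "{1..5::nat} = {m, i, j, k, l}" using m h(1) mi by blast
    have ex: "p i + p j - p k - p l \<noteq> 0 \<and> (\<forall>X \<in> {p m, p i, p j, p k, p l}.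
      infdist X (line_through ((7/40) *\<^sub>R (p m + p i + p j + p k + p l) + (1/8) *\<^sub>R p m) (p i + p j - p k - p l)) = sqrt (49/80))"
      by (rule upper_geom) (use h mi in \<open>auto intro!: R\<close>)
    show ?thesis
      unfolding circumscribing_cylinder_def cylinder_def
    proof (rule exI[of _ "(7/40) *\<^sub>R (p m + p i + p j + p k + p l) + (1/8) *\<^sub>R p m"], intro conjI ballI)
      show "p i + p j - p k - p l \<noteq> 0" using ex by blast
      show "sqrt (49/80) > (0::real)" by simp
      fix n assume "n \<in> {1..5::nat}"
      then have "n \<in> {m, i, j, k, l}" unfolding all .
      then have "p n \<in> {p m, p i, p j, p k, p l}" by (elim insertE) auto
      then show "p n \<in> {x. infdist x (line_through ((7/40) *\<^sub>R (p m + p i + p j + p k + p l) + (1/8) *\<^sub>R p m) (p i + p j - p k - p l)) = sqrt (49/80)}"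
        using ex by blast
    qed
  qed
  have part2: "\<exists>a. circumscribing_cylinder {1..5} p a (p 2 + p 3 - p 4 - p 5) (sqrt (49/80))"
    by (rule part3) simp_all
  show ?thesis
  proof (intro conjI allI impI)
    fix a d \<rho> assume "circumscribing_cylinder {1..5} p a d \<rho>"
    then show "\<rho> \<ge> sqrt (49/80)" by (rule part1)
  next
    show "\<exists>a. circumscribing_cylinder {1..5} p a (p 2 + p 3 - p 4 - p 5) (sqrt (49/80))" by (rule part2)
  next
    fix i j k l :: nat assume hh: "{i, j, k, l} \<subseteq> {1..5} \<and> distinct [i, j, k, l]"
    show "\<exists>a. circumscribing_cylinder {1..5} p a (p i + p j - p k - p l) (sqrt (49/80))"
      using hh by (intro part3) simp_all
  qed
qed

end
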